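(* Consider the two-individual system under (h1), (h2), (h3), and suppose $M>0$. Then both individuals act infinitely (countably) many times after any fixed time $t_{start}\ge0$; that is, the system is in the full action state.
   Context: Two-individual model ($n=2$): parameters $\sigma_A,\sigma_S\ge 0$, $\sigma_C>0$, $\mu_S\in[0,1]$, $\mu_C>0$, $r>0$, $\tau\in(0,1)$, $\alpha_1,\alpha_2\in(-1,1)$. States $x_i\in(-1,1)$, $y_i\in[0,1]$, with $\gamma_1=y_2$, $\gamma_2=y_1$. Between action events: $\dot x_i=[\sigma_A\alpha_i+\sigma_S(\gamma_i-\mu_S)]\,\sigma_C(\gamma_i+\mu_C)(1-x_i)(1+x_i)$, $\dot y_i=-ry_i$. Individual $i$ "acts" at time $t$ when $x_i(t)$ reaches $\tau$; immediately afterwards $x_i$ is reset to $0$ and $y_i$ to $1$, and evolution resumes. Hypotheses: (h1) $\sigma_A\alpha_1-\sigma_S\mu_S>0$; (h2) $\sigma_A\alpha_2-\sigma_S\mu_S\le0$; (h3) $x_1(0)=y_1(0)=y_2(0)=0$ and $x_2(0)\in(-1,\tau)$. Constants: $A_1=(\sigma_A\alpha_1-\sigma_S\mu_S)\sigma_C\mu_C$, $T=\tanh^{-1}(\tau)/A_1$, $A=(\sigma_A\alpha_2-\sigma_S\mu_S)\sigma_C\mu_C$, $B=-\frac1r\big[(\sigma_A\alpha_2-\sigma_S\mu_S)\sigma_C+\sigma_S\sigma_C\mu_C\big]$, $C=-\frac{\sigma_S\sigma_C}{2r}$, $M=AT+Be^{-rT}+Ce^{-2rT}-B-C$. *)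

theory Defs
  imports Complex_Main
begin

definition xrate :: "real \<Rightarrow> real \<Rightarrow> real \<Rightarrow> real \<Rightarrow> real \<Rightarrow> real \<Rightarrow> real \<Rightarrow> real \<Rightarrow> real" where
  "xrate sA sS sC mS mC alpha gamma x =
     (sA * alpha + sS * (gamma - mS)) * sC * (gamma + mC) * (1 - x) * (1 + x)"

text \<open>Individual with state x acts at time t > 0 when x reaches the threshold tau
  from the left (x(t-) = tau); the value at t itself is the post-reset value.\<close>
definition acts :: "real \<Rightarrow> (real \<Rightarrow> real) \<Rightarrow> real \<Rightarrow> bool" where
  "acts tau x t \<longleftrightarrow> 0 < t \<and> (x \<longlongrightarrow> tau) (at_left t)"

definition indiv_ok :: "real \<Rightarrow> real \<Rightarrow> real \<Rightarrow> real \<Rightarrow> real \<Rightarrow> real \<Rightarrow> real \<Rightarrow> real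
    \<Rightarrow> (real \<Rightarrow> real) \<Rightarrow> (real \<Rightarrow> real) \<Rightarrow> (real \<Rightarrow> real) \<Rightarrow> bool" where
  "indiv_ok sA sS sC mS mC r tau alpha x y gamma \<longleftrightarrow>
     (\<forall>t\<ge>0.
        x t < tau \<and>
        (x has_real_derivative xrate sA sS sC mS mC alpha (gamma t) (x t)) (at t within {t..}) \<and>
        (y has_real_derivative (- r * y t)) (at t within {t..}) \<and>
        (acts tau x t \<longrightarrow> x t = 0 \<and> y t = 1) \<and>
        (0 < t \<and> \<not> acts tau x t \<longrightarrow> isCont x t \<and> isCont y t))"

definition system2 :: "real \<Rightarrow> real \<Rightarrow> real \<Rightarrow> real \<Rightarrow> real \<Rightarrow> real \<Rightarrow> real \<Rightarrow> real \<Rightarrow> real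
    \<Rightarrow> (real \<Rightarrow> real) \<Rightarrow> (real \<Rightarrow> real) \<Rightarrow> (real \<Rightarrow> real) \<Rightarrow> (real \<Rightarrow> real) \<Rightarrow> bool" where
  "system2 sA sS sC mS mC r tau a1 a2 x1 x2 y1 y2 \<longleftrightarrow>
     indiv_ok sA sS sC mS mC r tau a1 x1 y1 y2 \<and>
     indiv_ok sA sS sC mS mC r tau a2 x2 y2 y1"

definition Mconst :: "real \<Rightarrow> real \<Rightarrow> real \<Rightarrow> real \<Rightarrow> real \<Rightarrow> real \<Rightarrow> real \<Rightarrow> real \<Rightarrow> real \<Rightarrow> real" where
  "Mconst sA sS sC mS mC r tau a1 a2 =
     (let A1 = (sA * a1 - sS * mS) * sC * mC;
          T = artanh tau / A1;
          A = (sA * a2 - sS * mS) * sC * mC;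
          B = - (1 / r) * ((sA * a2 - sS * mS) * sC + sS * sC * mC);
          C = - (sS * sC) / (2 * r)
      in A * T + B * exp (- r * T) + C * exp (- 2 * r * T) - B - C)"

end

theory Submission
  imports Defs
begin


lemma real_induct_right:
  fixes a b :: real and P :: "real \<Rightarrow> bool"
  assumes ab: "a \<le> b" and base: "P a"
    and step: "\<And>t. a \<le> t \<Longrightarrow> t < b \<Longrightarrow> (\<forall>u\<in>{a..t}. P u) \<Longrightarrow> \<exists>d>0. \<forall>u. t < u \<and> u < t + d \<longrightarrow> P u"
    and lim: "\<And>t. a < t \<Longrightarrow> t \<le> b \<Longrightarrow> (\<forall>u\<in>{a..<t}. P u) \<Longrightarrow> P t"
  shows "\<forall>t\<in>{a..b}. P t"
proof -
  define S where "S = {t\<in>{a..b}. \<forall>u\<in>{a..t}. P u}"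
  define c where "c = Sup S"
  have aS: "a \<in> S" using ab base by (auto simp: S_def)
  have bdd: "bdd_above S" by (auto simp: S_def bdd_above_def)
  have ac: "a \<le> c" using aS bdd unfolding c_def by (rule cSup_upper)
  have cb: "c \<le> b" unfolding c_def using aS by (intro cSup_least) (auto simp: S_def)
  have below: "\<forall>u\<in>{a..<c}. P u"
  proof
    fix u assume u: "u \<in> {a..<c}"
    then have "u < Sup S" by (simp add: c_def)
    then obtain s where "s \<in> S" "u < s" using aS bdd less_cSup_iff[of S u] by blast
    then show "P u" using u by (auto simp: S_def)
  qed
  have Pc: "P c"
  proof (cases "c = a")
    case True then show ?thesis using base by simp
  next
    case False then show ?thesis using lim[of c] ac cb below by simp
  qed
  have cS: "c \<in> S" using below Pc ac cb by (auto simp: S_def)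
  have "c = b"
  proof (rule ccontr)
    assume "c \<noteq> b"
    then have cb': "c < b" using cb by simp
    have allc: "\<forall>u\<in>{a..c}. P u" using cS by (simp add: S_def)
    obtain d where d: "d > 0" "\<forall>u. c < u \<and> u < c + d \<longrightarrow> P u" using step[OF ac cb' allc] by blast
    define e where "e = min (c + d/2) b"
    have "e \<in> S" using d allc cb' ac unfolding S_def e_def by auto
    then have "e \<le> c" unfolding c_def using bdd by (rule cSup_upper)
    moreover have "c < e" using d cb' by (simp add: e_def)
    ultimately show False by simp
  qed
  then show ?thesis using cS by (auto simp: S_def)
qed

lemma rderiv_mono:
  fixes f f' :: "real \<Rightarrow> real" and a b :: real
  assumes ab: "a \<le> b" and cont: "continuous_on {a..b} f"
    and der: "\<And>t. a \<le> t \<Longrightarrow> t < b \<Longrightarrow> (f has_real_derivative f' t) (at t within {t..})"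
    and nn: "\<And>t. a \<le> t \<Longrightarrow> t < b \<Longrightarrow> f' t \<ge> 0"
  shows "f a \<le> f b"
proof -
  have key: "f b \<ge> f a - e * (b - a)" if e: "e > 0" for e
  proof -
    have "\<forall>t\<in>{a..b}. f t \<ge> f a - e * (t - a)"
    proof (rule real_induct_right[OF ab])
      show "f a \<ge> f a - e * (a - a)" by simp
    next
      fix t assume t: "a \<le> t" "t < b" and IH: "\<forall>u\<in>{a..t}. f u \<ge> f a - e * (u - a)"
      have ft: "f t \<ge> f a - e * (t - a)" using IH t by auto
      have "((\<lambda>y. (f y - f t) / (y - t)) \<longlongrightarrow> f' t) (at_right t)"
        using der[OF t] unfolding has_field_derivative_iff at_within_Ici_at_right .
      moreover have "f' t > - e" using nn[OF t] e by simp
      ultimately have "eventually (\<lambda>y. (f y - f t) / (y - t) > - e) (at_right t)"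
        by (rule order_tendstoD)
      then obtain d0 where d0: "d0 > t" "\<forall>y>t. y < d0 \<longrightarrow> (f y - f t) / (y - t) > - e"
        unfolding eventually_at_right_field by blast
      show "\<exists>d>0. \<forall>u. t < u \<and> u < t + d \<longrightarrow> f a - e * (u - a) \<le> f u"
      proof (intro exI[of _ "d0 - t"] conjI allI impI)
        show "d0 - t > 0" using d0 by simp
      next
        fix u assume u: "t < u \<and> u < t + (d0 - t)"
        then have "(f u - f t) / (u - t) > - e" using d0 by auto
        then have "f u - f t > - e * (u - t)" using u by (simp add: field_simps)
        then show "f a - e * (u - a) \<le> f u" using ft by (simp add: algebra_simps)
      qed
    next
      fix t assume t: "a < t" "t \<le> b" and IH: "\<forall>u\<in>{a..<t}. f a - e * (u - a) \<le> f u"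
      have c1: "continuous_on {a..t} f" by (rule continuous_on_subset[OF cont]) (use t in auto)
      then have "(f \<longlongrightarrow> f t) (at t within {a..t})"
        using t by (simp add: continuous_on_def)
      then have lf: "(f \<longlongrightarrow> f t) (at_left t)" using t by (simp add: at_within_Icc_at_left)
      have lg: "((\<lambda>u. f u + e * (u - a)) \<longlongrightarrow> f t + e * (t - a)) (at_left t)"
        by (intro tendsto_intros lf)
      have ev: "eventually (\<lambda>u. f a \<le> f u + e * (u - a)) (at_left t)"
        unfolding eventually_at_left_field using t IH
        by (intro exI[of _ a]) (auto simp: algebra_simps)
      have "f a \<le> f t + e * (t - a)"
        using lg ev by (rule tendsto_lowerbound) simp
      then show "f a - e * (t - a) \<le> f t" by (simp add: algebra_simps)
    qed
    then show ?thesis using ab by auto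
  qed
  show ?thesis
  proof (rule ccontr)
    assume "\<not> f a \<le> f b"
    then have lt: "f b < f a" by simp
    then have "b \<noteq> a" by auto
    then have ba: "b - a > 0" using ab by simp
    define e where "e = (f a - f b) / (2 * (b - a))"
    have e: "e > 0" using lt ba by (simp add: e_def)
    have "e * (b - a) = (f a - f b) / 2" using ba by (simp add: e_def field_simps)
    then show False using key[OF e] lt by simp
  qed
qed

lemma tanh_artanh_real:
  fixes x :: real assumes "-1 < x" "x < 1" shows "tanh (artanh x) = x"
proof -
  have p: "(1 + x) / (1 - x) > 0" using assms by simp
  have "exp (- 2 * artanh x) = inverse ((1 + x) / (1 - x))"
    using p by (simp add: artanh_def exp_minus)
  also have "\<dots> = (1 - x) / (1 + x)" by simp
  finally have e: "exp (- 2 * artanh x) = (1 - x) / (1 + x)" .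
  show ?thesis unfolding tanh_real_altdef e using assms by (simp add: field_simps)
qed

lemma artanh_le_iff:
  fixes x y :: real assumes "-1 < x" "x < 1" "-1 < y" "y < 1"
  shows "artanh x \<le> artanh y \<longleftrightarrow> x \<le> y"
  by (metis assms tanh_artanh_real tanh_real_le_iff)

lemma artanh_less_iff:
  fixes x y :: real assumes "-1 < x" "x < 1" "-1 < y" "y < 1"
  shows "artanh x < artanh y \<longleftrightarrow> x < y"
  by (metis assms tanh_artanh_real tanh_real_less_iff)



locale indiv =
  fixes sA sS sC mS mC r tau alpha :: real and x y g :: "real \<Rightarrow> real"
  assumes ok: "indiv_ok sA sS sC mS mC r tau alpha x y g"
    and tau0: "0 < tau" and tau1: "tau < 1" and r0: "0 < r"
begin

definition coef :: "real \<Rightarrow> real" where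
  "coef t = (sA * alpha + sS * (g t - mS)) * sC * (g t + mC)"

lemma x_lt: "t \<ge> 0 \<Longrightarrow> x t < tau"
  using ok by (simp add: indiv_ok_def)
lemma xder: "t \<ge> 0 \<Longrightarrow> (x has_real_derivative xrate sA sS sC mS mC alpha (g t) (x t)) (at t within {t..})"
  using ok by (simp add: indiv_ok_def)
lemma yder: "t \<ge> 0 \<Longrightarrow> (y has_real_derivative (- r * y t)) (at t within {t..})"
  using ok by (simp add: indiv_ok_def)
lemma reset: "t \<ge> 0 \<Longrightarrow> acts tau x t \<Longrightarrow> x t = 0 \<and> y t = 1"
  using ok by (simp add: indiv_ok_def)
lemma contx: "0 < t \<Longrightarrow> \<not> acts tau x t \<Longrightarrow> isCont x t"
  using ok by (simp add: indiv_ok_def)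
lemma conty: "0 < t \<Longrightarrow> \<not> acts tau x t \<Longrightarrow> isCont y t"
  using ok by (simp add: indiv_ok_def)

lemma rcont_x: "t \<ge> 0 \<Longrightarrow> (x \<longlongrightarrow> x t) (at_right t)"
  using DERIV_continuous[OF xder[of t]] by (simp add: continuous_within at_within_Ici_at_right)
lemma rcont_y: "t \<ge> 0 \<Longrightarrow> (y \<longlongrightarrow> y t) (at_right t)"
  using DERIV_continuous[OF yder[of t]] by (simp add: continuous_within at_within_Ici_at_right)

lemma lcont: "isCont f t \<Longrightarrow> (f \<longlongrightarrow> f t) (at_left t)" for f :: "real \<Rightarrow> real"
  by (simp add: isCont_def filterlim_at_split)

lemma no_accum:
  assumes t: "t \<ge> 0"
  shows "\<exists>d>0. \<forall>u. t < u \<and> u < t + d \<longrightarrow> \<not> acts tau x u"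
proof -
  have "eventually (\<lambda>u. x u < x t + tau/3) (at_right t)"
    using rcont_x[OF t] tau0 by (intro order_tendstoD) auto
  moreover have "eventually (\<lambda>u. x u > x t - tau/3) (at_right t)"
    using rcont_x[OF t] tau0 by (intro order_tendstoD) auto
  ultimately have "eventually (\<lambda>u. x u < x t + tau/3 \<and> x u > x t - tau/3) (at_right t)"
    by (rule eventually_conj)
  then obtain b where b: "b > t" "\<forall>u>t. u < b \<longrightarrow> x u < x t + tau/3 \<and> x u > x t - tau/3"
    unfolding eventually_at_right_field by blast
  show ?thesis
  proof (intro exI[of _ "b - t"] conjI allI impI notI)
    show "b - t > 0" using b by simp
  next
    fix u assume u: "t < u \<and> u < t + (b - t)" and act: "acts tau x u"
    have xu: "x u = 0" using reset[OF _ act] u t by simp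
    have "(x \<longlongrightarrow> tau) (at_left u)" using act by (simp add: acts_def)
    then have "eventually (\<lambda>v. x v > 2 * tau / 3) (at_left u)"
      using tau0 by (intro order_tendstoD) auto
    then obtain b' where b': "b' < u" "\<forall>v>b'. v < u \<longrightarrow> x v > 2 * tau / 3"
      unfolding eventually_at_left_field by blast
    define v where "v = (max b' t + u) / 2"
    have v: "v > b'" "v < u" "v > t" using b' u by (auto simp: v_def)
    have "x v > 2 * tau / 3" using b' v by auto
    moreover have "x v < x t + tau/3" using b v u by auto
    moreover have "x u > x t - tau/3" using b u by auto
    ultimately show False using xu tau0 by simp
  qed
qed

lemma cont_on_x:
  assumes "0 \<le> a" "\<forall>u. a < u \<and> u \<le> b \<longrightarrow> \<not> acts tau x u"
  shows "continuous_on {a..b} x"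
  unfolding continuous_on_eq_continuous_within
proof
  fix u assume u: "u \<in> {a..b}"
  show "continuous (at u within {a..b}) x"
  proof (cases "u = a")
    case True
    have "(x \<longlongrightarrow> x u) (at u within {u..})"
      using rcont_x[of u] assms u by (simp add: at_within_Ici_at_right)
    moreover have sub: "{a..b} \<subseteq> {u..}" using True by auto
    ultimately show ?thesis unfolding continuous_within by (rule tendsto_within_subset)
  next
    case False
    then have "isCont x u" using assms u by (intro contx) auto
    then show ?thesis by (rule continuous_at_imp_continuous_at_within)
  qed
qed

lemma cont_on_y:
  assumes "0 \<le> a" "\<forall>u. a < u \<and> u \<le> b \<longrightarrow> \<not> acts tau x u"
  shows "continuous_on {a..b} y"
  unfolding continuous_on_eq_continuous_within
proof
  fix u assume u: "u \<in> {a..b}"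
  show "continuous (at u within {a..b}) y"
  proof (cases "u = a")
    case True
    have "(y \<longlongrightarrow> y u) (at u within {u..})"
      using rcont_y[of u] assms u by (simp add: at_within_Ici_at_right)
    moreover have sub: "{a..b} \<subseteq> {u..}" using True by auto
    ultimately show ?thesis unfolding continuous_within by (rule tendsto_within_subset)
  next
    case False
    then have "isCont y u" using assms u by (intro conty) auto
    then show ?thesis by (rule continuous_at_imp_continuous_at_within)
  qed
qed

lemma y_sol:
  assumes a: "0 \<le> a" "a \<le> b" and na: "\<forall>u. a < u \<and> u \<le> b \<longrightarrow> \<not> acts tau x u"
  shows "y b = y a * exp (- r * (b - a))"
proof -
  define G where "G v = y v * exp (r * v)" for v
  have der: "(G has_real_derivative 0) (at v within {v..})" if "a \<le> v" for v
  proof -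
    have "(G has_real_derivative (- r * y v) * exp (r * v) + y v * (exp (r * v) * r)) (at v within {v..})"
      unfolding G_def[abs_def] using that a
      by (auto intro!: derivative_eq_intros yder)
    then show ?thesis by (rule DERIV_cong) (simp add: algebra_simps)
  qed
  have cG: "continuous_on {a..b} G" unfolding G_def[abs_def]
    by (intro continuous_intros cont_on_y a na)
  have "G a \<le> G b" using a(2) cG by (rule rderiv_mono[where f' = "\<lambda>_. 0"]) (use der in auto)
  moreover have "- G a \<le> - G b"
  proof (rule rderiv_mono[where f = "\<lambda>v. - G v" and f' = "\<lambda>_. 0"])
    show "a \<le> b" by fact
    show "continuous_on {a..b} (\<lambda>v. - G v)" using cG by (intro continuous_intros)
    fix t assume "a \<le> t" "t < b"
    show "((\<lambda>v. - G v) has_real_derivative 0) (at t within {t..})"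
      using DERIV_minus[OF der[of t]] \<open>a \<le> t\<close> by simp
  qed simp
  ultimately have "G b = G a" by simp
  then have "y b * exp (r * b) = y a * exp (r * a)" by (simp add: G_def)
  then have "y b = y a * exp (r * a) / exp (r * b)" by (simp add: field_simps)
  also have "\<dots> = y a * exp (r * a - r * b)"
    by (simp add: exp_diff)
  also have "\<dots> = y a * exp (- r * (b - a))"
    by (simp add: algebra_simps)
  finally show ?thesis .
qed

lemma y_range:
  assumes y0: "0 \<le> y 0" "y 0 \<le> 1" and t: "t \<ge> 0"
  shows "0 \<le> y t \<and> y t \<le> 1"
proof -
  have "\<forall>u\<in>{0..t}. 0 \<le> y u \<and> y u \<le> 1"
  proof (rule real_induct_right[OF t])
    show "0 \<le> y 0 \<and> y 0 \<le> 1" using y0 by simp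
  next
    fix s assume s: "0 \<le> s" "s < t" and IH: "\<forall>u\<in>{0..s}. 0 \<le> y u \<and> y u \<le> 1"
    obtain d where d: "d > 0" "\<forall>u. s < u \<and> u < s + d \<longrightarrow> \<not> acts tau x u" using no_accum[OF s(1)] by blast
    have "\<forall>u. s < u \<and> u < s + d \<longrightarrow> 0 \<le> y u \<and> y u \<le> 1"
    proof (intro allI impI)
      fix u assume u: "s < u \<and> u < s + d"
      have "y u = y s * exp (- r * (u - s))" using s u d by (intro y_sol) auto
      moreover have "exp (- r * (u - s)) \<le> 1" using r0 u by simp
      moreover have "0 \<le> y s \<and> y s \<le> 1" using IH s by auto
      ultimately show "0 \<le> y u \<and> y u \<le> 1" by (simp add: mult_le_one)
    qed
    then show "\<exists>d>0. \<forall>u. s < u \<and> u < s + d \<longrightarrow> 0 \<le> y u \<and> y u \<le> 1"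
      using d(1) by blast
  next
    fix s assume s: "0 < s" "s \<le> t" and IH: "\<forall>u\<in>{0..<s}. 0 \<le> y u \<and> y u \<le> 1"
    show "0 \<le> y s \<and> y s \<le> 1"
    proof (cases "acts tau x s")
      case True then show ?thesis using reset[of s] s by simp
    next
      case False
      then have lc: "(y \<longlongrightarrow> y s) (at_left s)" using conty[OF s(1)] lcont by blast
      have ev: "eventually (\<lambda>u. 0 \<le> y u \<and> y u \<le> 1) (at_left s)"
        unfolding eventually_at_left_field using s IH by (intro exI[of _ 0]) auto
      have "0 \<le> y s" using lc eventually_mono[OF ev] by (rule tendsto_lowerbound) auto
      moreover have "y s \<le> 1" using lc eventually_mono[OF ev] by (rule tendsto_upperbound) auto
      ultimately show ?thesis by simp
    qed
  qed
  then show ?thesis using t by auto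
qed

lemma zder:
  assumes t: "t \<ge> 0" and x1: "-1 < x t"
  shows "((\<lambda>v. artanh (x v)) has_real_derivative coef t) (at t within {t..})"
proof -
  have xt: "x t < 1" using x_lt[OF t] tau1 by simp
  have "\<bar>x t\<bar> < 1" using x1 xt by simp
  from DERIV_chain2[OF artanh_real_has_field_derivative[OF this] xder[OF t]]
  have "((\<lambda>v. artanh (x v)) has_real_derivative
      1 / (1 - (x t)\<^sup>2) * xrate sA sS sC mS mC alpha (g t) (x t)) (at t within {t..})" .
  then show ?thesis
  proof (rule DERIV_cong)
    have ne: "1 - (x t)\<^sup>2 \<noteq> 0" using x1 xt by (simp add: power2_eq_square) (smt (verit) mult_less_cancel_right2 mult_minus_left)
    have "xrate sA sS sC mS mC alpha (g t) (x t) = coef t * (1 - (x t)\<^sup>2)"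
      by (simp add: xrate_def coef_def power2_eq_square algebra_simps)
    then show "1 / (1 - (x t)\<^sup>2) * xrate sA sS sC mS mC alpha (g t) (x t) = coef t"
      using ne by simp
  qed
qed

end


context indiv begin

lemma cont_on_z:
  assumes "0 \<le> a" "\<forall>u. a < u \<and> u \<le> b \<longrightarrow> \<not> acts tau x u" "\<forall>v\<in>{a..b}. -1 < x v"
  shows "continuous_on {a..b} (\<lambda>v. artanh (x v))"
proof (rule continuous_on_artanh')
  show "continuous_on {a..b} x" using assms by (intro cont_on_x)
  fix v assume v: "v \<in> {a..b}"
  then have "x v < tau" using assms by (intro x_lt) auto
  then show "x v \<in> {-1<..<1}" using v assms tau1 by auto
qed

lemma z_incr:
  assumes a: "0 \<le> a" "a \<le> b" and na: "\<forall>u. a < u \<and> u \<le> b \<longrightarrow> \<not> acts tau x u"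
    and xl: "\<forall>v\<in>{a..b}. -1 < x v" and ch: "continuous_on {a..b} h"
    and hd: "\<And>v. a \<le> v \<Longrightarrow> v < b \<Longrightarrow> (h has_real_derivative h' v) (at v within {v..})"
    and le: "\<And>v. a \<le> v \<Longrightarrow> v < b \<Longrightarrow> h' v \<le> coef v"
  shows "h b - h a \<le> artanh (x b) - artanh (x a)"
proof -
  have "artanh (x a) - h a \<le> artanh (x b) - h b"
  proof (rule rderiv_mono[where f = "\<lambda>v. artanh (x v) - h v" and f' = "\<lambda>v. coef v - h' v"])
    show "a \<le> b" by fact
    show "continuous_on {a..b} (\<lambda>v. artanh (x v) - h v)"
      using cont_on_z[OF a(1) na xl] ch by (rule continuous_on_diff)
    fix t assume t: "a \<le> t" "t < b"
    show "((\<lambda>v. artanh (x v) - h v) has_real_derivative coef t - h' t) (at t within {t..})"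
      using t a xl by (intro DERIV_diff zder hd) auto
    show "0 \<le> coef t - h' t" using le[OF t] by simp
  qed
  then show ?thesis by simp
qed

lemma z_decr:
  assumes a: "0 \<le> a" "a \<le> b" and na: "\<forall>u. a < u \<and> u \<le> b \<longrightarrow> \<not> acts tau x u"
    and xl: "\<forall>v\<in>{a..b}. -1 < x v" and ch: "continuous_on {a..b} h"
    and hd: "\<And>v. a \<le> v \<Longrightarrow> v < b \<Longrightarrow> (h has_real_derivative h' v) (at v within {v..})"
    and le: "\<And>v. a \<le> v \<Longrightarrow> v < b \<Longrightarrow> coef v \<le> h' v"
  shows "artanh (x b) - artanh (x a) \<le> h b - h a"
proof -
  have "h a - artanh (x a) \<le> h b - artanh (x b)"
  proof (rule rderiv_mono[where f = "\<lambda>v. h v - artanh (x v)" and f' = "\<lambda>v. h' v - coef v"])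
    show "a \<le> b" by fact
    show "continuous_on {a..b} (\<lambda>v. h v - artanh (x v))"
      using cont_on_z[OF a(1) na xl] ch by (intro continuous_on_diff)
    fix t assume t: "a \<le> t" "t < b"
    show "((\<lambda>v. h v - artanh (x v)) has_real_derivative h' t - coef t) (at t within {t..})"
      using t a xl by (intro DERIV_diff zder hd) auto
    show "0 \<le> h' t - coef t" using le[OF t] by simp
  qed
  then show ?thesis by simp
qed

lemma x_lower:
  assumes K: "\<forall>t\<ge>0. \<bar>coef t\<bar> \<le> K" and x0: "-1 < x 0" "x 0 < 1" and t: "t \<ge> 0"
  shows "-1 < x t"
proof -
  define L where "L = min (artanh (x 0)) 0"
  have "\<forall>u\<in>{0..t}. tanh (L - K * u) \<le> x u"
  proof (rule real_induct_right[OF t])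
    have "tanh L \<le> tanh (artanh (x 0))" by (simp add: L_def)
    then show "tanh (L - K * 0) \<le> x 0" using tanh_artanh_real[OF x0] by simp
  next
    fix s assume s: "0 \<le> s" "s < t" and IH: "\<forall>u\<in>{0..s}. tanh (L - K * u) \<le> x u"
    have Ps: "tanh (L - K * s) \<le> x s" using IH s by auto
    have xs: "-1 < x s" using Ps tanh_real_gt_neg1[of "L - K * s"] by linarith
    have xs1: "x s < 1" using x_lt[OF s(1)] tau1 by simp
    have zs: "L - K * s \<le> artanh (x s)"
    proof -
      have "artanh (tanh (L - K * s)) \<le> artanh (x s)"
        using Ps xs xs1 tanh_real_bounds[of "L - K * s"] by (subst artanh_le_iff) auto
      then show ?thesis by (simp add: artanh_tanh_real)
    qed
    have "eventually (\<lambda>u. x u > -1) (at_right s)"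
      using rcont_x[OF s(1)] xs by (intro order_tendstoD) auto
    then obtain b where b: "b > s" "\<forall>u>s. u < b \<longrightarrow> x u > -1"
      unfolding eventually_at_right_field by blast
    obtain d where d: "d > 0" "\<forall>u. s < u \<and> u < s + d \<longrightarrow> \<not> acts tau x u" using no_accum[OF s(1)] by blast
    have "\<forall>u. s < u \<and> u < s + min d (b - s) \<longrightarrow> tanh (L - K * u) \<le> x u"
    proof (intro allI impI)
      fix u assume u: "s < u \<and> u < s + min d (b - s)"
      have "(\<lambda>v. - K * v) u - (\<lambda>v. - K * v) s \<le> artanh (x u) - artanh (x s)"
      proof (rule z_incr)
        show "0 \<le> s" "s \<le> u" using s u by auto
        show "\<forall>w. s < w \<and> w \<le> u \<longrightarrow> \<not> acts tau x w" using d u by auto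
        show "\<forall>v\<in>{s..u}. - 1 < x v" using b u xs by (auto simp: le_less)
        show "continuous_on {s..u} (\<lambda>v. - K * v)" by (intro continuous_intros)
        fix v assume v: "s \<le> v" "v < u"
        show "((\<lambda>v. - K * v) has_real_derivative - K) (at v within {v..})"
          by (auto intro!: derivative_eq_intros)
        show "- K \<le> coef v" using K v s by (smt (verit))
      qed
      then have "L - K * u \<le> artanh (x u)" using zs by (simp add: algebra_simps)
      then have "tanh (L - K * u) \<le> tanh (artanh (x u))" by simp
      moreover have "-1 < x u" using b u by auto
      moreover have "x u < 1" using x_lt[of u] u s tau1 by simp
      ultimately show "tanh (L - K * u) \<le> x u" using tanh_artanh_real by simp
    qed
    then show "\<exists>d>0. \<forall>u. s < u \<and> u < s + d \<longrightarrow> tanh (L - K * u) \<le> x u"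
      using d(1) b(1) by (intro exI[of _ "min d (b - s)"]) auto
  next
    fix s assume s: "0 < s" "s \<le> t" and IH: "\<forall>u\<in>{0..<s}. tanh (L - K * u) \<le> x u"
    have K0: "K \<ge> 0" using K abs_ge_zero order_trans by blast
    show "tanh (L - K * s) \<le> x s"
    proof (cases "acts tau x s")
      case True
      have "L \<le> 0" by (simp add: L_def)
      moreover have "K * s \<ge> 0" using K0 s by simp
      ultimately have "L - K * s \<le> 0" by linarith
      then show ?thesis using reset[of s] True s by simp
    next
      case False
      then have lc: "(x \<longlongrightarrow> x s) (at_left s)" using contx[OF s(1)] lcont by blast
      have lt: "((\<lambda>u. tanh (L - K * u)) \<longlongrightarrow> tanh (L - K * s)) (at_left s)"
        by (intro tendsto_intros) simp
      have ev: "eventually (\<lambda>u. tanh (L - K * u) \<le> x u) (at_left s)"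
        unfolding eventually_at_left_field using s IH by (intro exI[of _ 0]) auto
      show ?thesis by (rule tendsto_le[OF _ lc lt ev]) simp
    qed
  qed
  then have "tanh (L - K * t) \<le> x t" using t by auto
  then show ?thesis using tanh_real_gt_neg1[of "L - K * t"] by linarith
qed

lemma next_act:
  assumes s: "s \<ge> 0" and ex: "\<exists>t>s. acts tau x t"
  shows "\<exists>t>s. acts tau x t \<and> (\<forall>u. s < u \<and> u < t \<longrightarrow> \<not> acts tau x u)"
proof -
  define A where "A = {t. acts tau x t \<and> t > s}"
  define m where "m = Inf A"
  have ne: "A \<noteq> {}" using ex by (auto simp: A_def)
  have bdd: "bdd_below A" by (rule bdd_belowI[of _ s]) (auto simp: A_def)
  have ms: "s \<le> m" unfolding m_def using ne by (intro cInf_greatest) (auto simp: A_def)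
  have mA: "m \<in> A"
  proof (rule ccontr)
    assume nm: "m \<notin> A"
    obtain d where d: "d > 0" "\<forall>u. m < u \<and> u < m + d \<longrightarrow> \<not> acts tau x u"
      using no_accum[of m] ms s by auto
    have "Inf A < m + d" using d by (simp add: m_def)
    then obtain t where t: "t \<in> A" "t < m + d" using ne bdd cInf_less_iff[of A] by blast
    have "m \<le> t" unfolding m_def using t(1) bdd by (rule cInf_lower)
    then have "m < t" using nm t(1) by (cases "m = t") auto
    then show False using d t by (auto simp: A_def)
  qed
  have "\<forall>u. s < u \<and> u < m \<longrightarrow> \<not> acts tau x u"
  proof (intro allI impI notI)
    fix u assume u: "s < u \<and> u < m" and "acts tau x u"
    then have "u \<in> A" by (auto simp: A_def)
    then have "m \<le> u" unfolding m_def using bdd by (rule cInf_lower)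
    then show False using u by simp
  qed
  then show ?thesis using mA by (auto simp: A_def)
qed

end


lemma inf_from_after:
  fixes P :: "real \<Rightarrow> bool"
  assumes "\<forall>t0. \<exists>t\<ge>t0. P t"
  shows "infinite {t. P t \<and> t \<ge> ts}"
proof
  assume fin: "finite {t. P t \<and> t \<ge> ts}"
  then obtain B where B: "\<forall>t\<in>{t. P t \<and> t \<ge> ts}. t \<le> B"
    using bdd_above_finite[OF fin] by (auto simp: bdd_above_def)
  obtain t where "t \<ge> max B ts + 1" "P t" using assms by blast
  then show False using B by force
qed

lemma coef_abs:
  fixes sA sS sC mS mC al gm :: real
  assumes "0 \<le> gm" "gm \<le> 1" "sS \<ge> 0" "sC > 0" "mC > 0"
  shows "\<bar>(sA * al + sS * (gm - mS)) * sC * (gm + mC)\<bar> \<le> (\<bar>sA * al - sS * mS\<bar> + sS) * sC * (1 + mC)"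
proof -
  have e: "(sA * al + sS * (gm - mS)) * sC * (gm + mC) = ((sA * al - sS * mS) + sS * gm) * (sC * (gm + mC))"
    by (simp add: algebra_simps)
  have "\<bar>(sA * al - sS * mS) + sS * gm\<bar> \<le> \<bar>sA * al - sS * mS\<bar> + sS"
  proof -
    have "\<bar>sS * gm\<bar> \<le> sS" using assms by (simp add: abs_mult mult_left_le)
    moreover have "\<bar>(sA * al - sS * mS) + sS * gm\<bar> \<le> \<bar>sA * al - sS * mS\<bar> + \<bar>sS * gm\<bar>"
      by (rule abs_triangle_ineq)
    ultimately show ?thesis by linarith
  qed
  moreover have "\<bar>sC * (gm + mC)\<bar> \<le> sC * (1 + mC)" using assms by (simp add: abs_mult)
  ultimately have "\<bar>(sA * al - sS * mS) + sS * gm\<bar> * \<bar>sC * (gm + mC)\<bar> \<le> (\<bar>sA * al - sS * mS\<bar> + sS) * (sC * (1 + mC))"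
    by (intro mult_mono) auto
  then show ?thesis unfolding e abs_mult[symmetric] by (simp only: mult.assoc)
qed

locale setting =
  fixes sA sS sC mS mC r tau a1 a2 :: real
    and x1 x2 y1 y2 :: "real \<Rightarrow> real"
  assumes sA: "sA \<ge> 0" and sS: "sS \<ge> 0" and sC: "sC > 0" and mS0: "0 \<le> mS" and mS1: "mS \<le> 1"
    and mC: "mC > 0" and r: "r > 0"
    and tau0: "0 < tau" and tau1: "tau < 1"
    and h1: "sA * a1 - sS * mS > 0"
    and h2: "sA * a2 - sS * mS \<le> 0"
    and x10: "x1 0 = 0" and y10: "y1 0 = 0" and y20: "y2 0 = 0" and x20: "-1 < x2 0" "x2 0 < tau"
    and sys: "system2 sA sS sC mS mC r tau a1 a2 x1 x2 y1 y2"
    and M: "Mconst sA sS sC mS mC r tau a1 a2 > 0"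

sublocale setting \<subseteq> I1: indiv sA sS sC mS mC r tau a1 x1 y1 y2
  using sys tau0 tau1 r by unfold_locales (auto simp: system2_def)

sublocale setting \<subseteq> I2: indiv sA sS sC mS mC r tau a2 x2 y2 y1
  using sys tau0 tau1 r by unfold_locales (auto simp: system2_def)

context setting begin

lemma y1r: "t \<ge> 0 \<Longrightarrow> 0 \<le> y1 t \<and> y1 t \<le> 1"
  using I1.y_range y10 by simp
lemma y2r: "t \<ge> 0 \<Longrightarrow> 0 \<le> y2 t \<and> y2 t \<le> 1"
  using I2.y_range y20 by simp

definition "A1 = (sA * a1 - sS * mS) * sC * mC"
definition "Amax = (sA * a1 - sS * mS + sS) * sC * (1 + mC)"

lemma A1_pos: "A1 > 0" using h1 sC mC by (simp add: A1_def)

lemma coef1_lo: "t \<ge> 0 \<Longrightarrow> A1 \<le> I1.coef t"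
proof -
  assume t: "t \<ge> 0"
  have "sA * a1 - sS * mS \<le> sA * a1 + sS * (y2 t - mS)" using y2r[OF t] sS by (simp add: algebra_simps)
  moreover have "sC * mC \<le> sC * (y2 t + mC)" using y2r[OF t] sC by simp
  ultimately have "(sA * a1 - sS * mS) * (sC * mC) \<le> (sA * a1 + sS * (y2 t - mS)) * (sC * (y2 t + mC))"
    using h1 sC mC by (intro mult_mono) auto
  then show ?thesis by (simp add: A1_def I1.coef_def mult.assoc)
qed

lemma coef1_hi: "t \<ge> 0 \<Longrightarrow> I1.coef t \<le> Amax"
proof -
  assume t: "t \<ge> 0"
  have "sS * y2 t \<le> sS" using y2r[OF t] sS by (simp add: mult_left_le)
  then have "sA * a1 + sS * (y2 t - mS) \<le> sA * a1 - sS * mS + sS" by (simp add: algebra_simps)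
  moreover have "sC * (y2 t + mC) \<le> sC * (1 + mC)" using y2r[OF t] sC by simp
  moreover have "0 \<le> sA * a1 - sS * mS + sS" using h1 sS by linarith
  moreover have "0 \<le> sC * (y2 t + mC)" using y2r[OF t] sC mC by simp
  ultimately have "(sA * a1 + sS * (y2 t - mS)) * (sC * (y2 t + mC)) \<le> (sA * a1 - sS * mS + sS) * (sC * (1 + mC))"
    by (rule mult_mono)
  then show ?thesis by (simp add: Amax_def I1.coef_def mult.assoc)
qed

lemma x1_gt: "t \<ge> 0 \<Longrightarrow> -1 < x1 t"
proof -
  assume t: "t \<ge> 0"
  show ?thesis
  proof (rule I1.x_lower[OF _ _ _ t])
    show "\<forall>t\<ge>0. \<bar>I1.coef t\<bar> \<le> (\<bar>sA * a1 - sS * mS\<bar> + sS) * sC * (1 + mC)"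
      using coef_abs y2r sS sC mC unfolding I1.coef_def by blast
  qed (use x10 in auto)
qed

lemma x2_gt: "t \<ge> 0 \<Longrightarrow> -1 < x2 t"
proof -
  assume t: "t \<ge> 0"
  show ?thesis
  proof (rule I2.x_lower[OF _ _ _ t])
    show "\<forall>t\<ge>0. \<bar>I2.coef t\<bar> \<le> (\<bar>sA * a2 - sS * mS\<bar> + sS) * sC * (1 + mC)"
      using coef_abs y1r sS sC mC unfolding I2.coef_def by blast
  qed (use x20 tau1 in auto)
qed

lemma artanh_x_lt:
  assumes "-1 < x" "x < tau" shows "artanh x < artanh tau"
  using assms tau1 tau0 by (subst artanh_less_iff) auto

lemma acts1_after: "\<exists>t\<ge>t0. acts tau x1 t"
proof (rule ccontr)
  assume "\<not> (\<exists>t\<ge>t0. acts tau x1 t)"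
  then have na: "\<forall>t\<ge>t0. \<not> acts tau x1 t" by auto
  define a where "a = max t0 0"
  define D where "D = artanh tau - artanh (x1 a)"
  have a0: "0 \<le> a" by (simp add: a_def)
  have D0: "D > 0" using artanh_x_lt[OF x1_gt[OF a0] I1.x_lt[OF a0]] by (simp add: D_def)
  define b where "b = a + D / A1 + 1"
  have ab: "a \<le> b" using D0 A1_pos by (simp add: b_def)
  have "(\<lambda>v. A1 * v) b - (\<lambda>v. A1 * v) a \<le> artanh (x1 b) - artanh (x1 a)"
  proof (rule I1.z_incr[OF a0 ab])
    show "\<forall>u. a < u \<and> u \<le> b \<longrightarrow> \<not> acts tau x1 u" using na by (auto simp: a_def)
    show "\<forall>v\<in>{a..b}. - 1 < x1 v" using x1_gt a0 by auto
    show "continuous_on {a..b} ((*) A1)" by (intro continuous_intros)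
    fix v assume v: "a \<le> v" "v < b"
    show "((*) A1 has_real_derivative A1) (at v within {v..})" by (auto intro!: derivative_eq_intros)
    show "A1 \<le> I1.coef v" using coef1_lo v a0 by auto
  qed
  moreover have "artanh (x1 b) < artanh tau"
    using artanh_x_lt[OF x1_gt I1.x_lt] a0 ab by auto
  moreover have "A1 * b - A1 * a = D + A1" using A1_pos by (simp add: b_def field_simps)
  ultimately show False using A1_pos by (simp add: D_def)
qed

end


context setting begin

definition "Aa = (sA * a2 - sS * mS) * sC * mC"
definition "Bb = - (1 / r) * ((sA * a2 - sS * mS) * sC + sS * sC * mC)"
definition "Cc = - (sS * sC) / (2 * r)"
definition "Gf L = Aa * L + Bb * exp (- r * L) + Cc * exp (- 2 * r * L) - Bb - Cc"
definition "gp L = (sA * a2 + sS * (exp (- r * L) - mS)) * sC * (exp (- r * L) + mC)"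
definition "sg L = sA * a2 - sS * mS + sS * exp (- r * L)"
definition "Tt = artanh tau / A1"
definition "Lmin = artanh tau / Amax"

lemma M_eq: "Mconst sA sS sC mS mC r tau a1 a2 = Gf Tt"
  by (simp add: Mconst_def Let_def Gf_def Tt_def A1_def Aa_def Bb_def Cc_def)

lemma Gf0: "Gf 0 = 0" by (simp add: Gf_def)

lemma Gder: "(Gf has_real_derivative gp L) (at L within S)"
proof -
  have ee: "exp (- 2 * r * L) = exp (- r * L) * exp (- r * L)"
    by (simp add: exp_add[symmetric])
  have "(Gf has_real_derivative Aa + Bb * (exp (- r * L) * (- r)) + Cc * (exp (- 2 * r * L) * (- 2 * r))) (at L within S)"
    unfolding Gf_def[abs_def] by (auto intro!: derivative_eq_intros)
  then show ?thesis
  proof (rule DERIV_cong)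
    show "Aa + Bb * (exp (- r * L) * (- r)) + Cc * (exp (- 2 * r * L) * (- 2 * r)) = gp L"
      unfolding ee Aa_def Bb_def Cc_def gp_def using r by (simp add: field_simps)
  qed
qed

lemma gp_eq: "gp L = sg L * (sC * (exp (- r * L) + mC))"
  by (simp add: gp_def sg_def algebra_simps)

lemma gp_fac_pos: "sC * (exp (- r * L) + mC) > 0"
  using sC mC by (simp add: add_pos_pos)

lemma sg_anti: "v \<le> w \<Longrightarrow> sg w \<le> sg v"
  unfolding sg_def using sS r by (simp add: mult_left_mono)

lemma gp_nonneg: "sg L \<ge> 0 \<Longrightarrow> gp L \<ge> 0"
  using gp_fac_pos[of L] by (simp add: gp_eq)
lemma gp_nonpos: "sg L \<le> 0 \<Longrightarrow> gp L \<le> 0"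
  using gp_fac_pos[of L] by (simp add: gp_eq mult_nonpos_nonneg)
lemma gp_pos: "sg L > 0 \<Longrightarrow> gp L > 0"
  using gp_fac_pos[of L] by (simp add: gp_eq)

lemma artanh_tau_pos: "artanh tau > 0"
  using artanh_less_iff[of 0 tau] tau0 tau1 by simp

lemma A1_le_Amax: "A1 \<le> Amax"
proof -
  have "(sA * a1 - sS * mS) * (sC * mC) \<le> (sA * a1 - sS * mS + sS) * (sC * (1 + mC))"
    using h1 sS sC mC by (intro mult_mono) auto
  then show ?thesis by (simp add: A1_def Amax_def mult.assoc)
qed

lemma Lmin_pos: "Lmin > 0"
  using artanh_tau_pos A1_pos A1_le_Amax by (simp add: Lmin_def)

lemma Lmin_le: "Lmin \<le> Tt"
  unfolding Lmin_def Tt_def using artanh_tau_pos A1_pos A1_le_Amax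
  by (simp add: frac_le)

lemma G_lb:
  assumes L: "Lmin \<le> L" "L \<le> Tt"
  shows "min (Gf Lmin) (Gf Tt) \<le> Gf L"
proof (cases "sg L \<ge> 0")
  case True
  have "Gf Lmin \<le> Gf L"
  proof (rule DERIV_nonneg_imp_nondecreasing[OF L(1)])
    fix v assume v: "Lmin \<le> v" "v \<le> L"
    have "sg v \<ge> 0" using sg_anti[OF v(2)] True by simp
    then show "\<exists>y. DERIV Gf v :> y \<and> y \<ge> 0" using Gder gp_nonneg by blast
  qed
  then show ?thesis by simp
next
  case False
  have "Gf L \<ge> Gf Tt"
  proof (rule DERIV_nonpos_imp_nonincreasing[OF L(2)])
    fix v assume v: "L \<le> v" "v \<le> Tt"
    have "sg v \<le> 0" using sg_anti[OF v(1)] False by simp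
    then show "\<exists>y. DERIV Gf v :> y \<and> y \<le> 0" using Gder gp_nonpos by blast
  qed
  then show ?thesis by simp
qed

lemma G_Lmin_pos: "Gf Lmin > 0"
proof (cases "sg Lmin > 0")
  case True
  have "Gf 0 < Gf Lmin"
  proof (rule DERIV_pos_imp_increasing[OF Lmin_pos])
    fix v assume v: "0 \<le> v" "v \<le> Lmin"
    have "sg v > 0" using sg_anti[OF v(2)] True by simp
    then show "\<exists>y. DERIV Gf v :> y \<and> y > 0" using Gder gp_pos by blast
  qed
  then show ?thesis by (simp add: Gf0)
next
  case False
  have "Gf Lmin \<ge> Gf Tt"
  proof (rule DERIV_nonpos_imp_nonincreasing[OF Lmin_le])
    fix v assume v: "Lmin \<le> v" "v \<le> Tt"
    have "sg v \<le> 0" using sg_anti[OF v(1)] False by simp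
    then show "\<exists>y. DERIV Gf v :> y \<and> y \<le> 0" using Gder gp_nonpos by blast
  qed
  then show ?thesis using M M_eq by simp
qed

definition "g0 = min (Gf Lmin) (Gf Tt)"

lemma g0_pos: "g0 > 0"
  using G_Lmin_pos M M_eq by (simp add: g0_def)

definition "nxt s = (SOME t. t > s \<and> acts tau x1 t \<and> (\<forall>u. s < u \<and> u < t \<longrightarrow> \<not> acts tau x1 u))"

lemma nxt:
  assumes s: "s \<ge> 0"
  shows "nxt s > s \<and> acts tau x1 (nxt s) \<and> (\<forall>u. s < u \<and> u < nxt s \<longrightarrow> \<not> acts tau x1 u)"
proof -
  obtain t where "t \<ge> s + 1" "acts tau x1 t" using acts1_after by blast
  then have "\<exists>t>s. acts tau x1 t" by (intro exI[of _ t]) auto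
  from I1.next_act[OF s this]
  have "\<exists>t. t > s \<and> acts tau x1 t \<and> (\<forall>u. s < u \<and> u < t \<longrightarrow> \<not> acts tau x1 u)" by blast
  then show ?thesis unfolding nxt_def by (rule someI_ex)
qed

lemma gain:
  assumes s: "s \<ge> 0" and as: "acts tau x1 s"
    and na2: "\<forall>u. s < u \<and> u \<le> nxt s \<longrightarrow> \<not> acts tau x2 u"
  shows "g0 \<le> artanh (x2 (nxt s)) - artanh (x2 s)"
proof -
  define s' where "s' = nxt s"
  have ss': "s < s'" and as': "acts tau x1 s'" and na1: "\<forall>u. s < u \<and> u < s' \<longrightarrow> \<not> acts tau x1 u"
    using nxt[OF s] by (auto simp: s'_def)
  have x1s: "x1 s = 0" and y1s: "y1 s = 1" using I1.reset[OF s as] by auto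
  have ysol: "y1 v = exp (- r * (v - s))" if v: "s \<le> v" "v < s'" for v
    using I1.y_sol[OF s v(1)] na1 v y1s by auto
  have gap_hi: "s' - s \<le> Tt"
  proof (rule ccontr)
    assume "\<not> s' - s \<le> Tt"
    define v where "v = s + Tt"
    have Tt0: "Tt > 0" using artanh_tau_pos A1_pos by (simp add: Tt_def)
    have v: "s \<le> v" "v < s'" using \<open>\<not> s' - s \<le> Tt\<close> Tt0 by (auto simp: v_def)
    have "(\<lambda>w. A1 * w) v - (\<lambda>w. A1 * w) s \<le> artanh (x1 v) - artanh (x1 s)"
    proof (rule I1.z_incr[OF s v(1)])
      show "\<forall>u. s < u \<and> u \<le> v \<longrightarrow> \<not> acts tau x1 u" using na1 v by auto
      show "\<forall>w\<in>{s..v}. - 1 < x1 w" using x1_gt s by auto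
      show "continuous_on {s..v} ((*) A1)" by (intro continuous_intros)
      fix w assume w: "s \<le> w" "w < v"
      show "((*) A1 has_real_derivative A1) (at w within {w..})" by (auto intro!: derivative_eq_intros)
      show "A1 \<le> I1.coef w" using coef1_lo w s by auto
    qed
    moreover have "artanh (x1 v) < artanh tau"
      using artanh_x_lt[OF x1_gt I1.x_lt] s v by auto
    moreover have "A1 * v - A1 * s = artanh tau" using A1_pos by (simp add: v_def Tt_def field_simps)
    ultimately show False using x1s by simp
  qed
  have gap_lo: "Lmin \<le> s' - s"
  proof -
    have Amax_pos: "Amax > 0" using A1_pos A1_le_Amax by simp
    have ev: "eventually (\<lambda>v. x1 v \<le> tanh (Amax * (v - s))) (at_left s')"
      unfolding eventually_at_left_field
    proof (intro exI[of _ s] conjI allI impI)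
      show "s < s'" by fact
      fix v assume v: "s < v" "v < s'"
      have "artanh (x1 v) - artanh (x1 s) \<le> (\<lambda>w. Amax * w) v - (\<lambda>w. Amax * w) s"
      proof (rule I1.z_decr[OF s])
        show "s \<le> v" using v by simp
        show "\<forall>u. s < u \<and> u \<le> v \<longrightarrow> \<not> acts tau x1 u" using na1 v by auto
        show "\<forall>w\<in>{s..v}. - 1 < x1 w" using x1_gt s by auto
        show "continuous_on {s..v} ((*) Amax)" by (intro continuous_intros)
        fix w assume w: "s \<le> w" "w < v"
        show "((*) Amax has_real_derivative Amax) (at w within {w..})" by (auto intro!: derivative_eq_intros)
        show "I1.coef w \<le> Amax" using coef1_hi w s by auto
      qed
      then have "artanh (x1 v) \<le> Amax * (v - s)" using x1s by (simp add: algebra_simps)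
      then have "tanh (artanh (x1 v)) \<le> tanh (Amax * (v - s))" by simp
      moreover have "-1 < x1 v" "x1 v < 1" using x1_gt[of v] I1.x_lt[of v] tau1 s v by auto
      ultimately show "x1 v \<le> tanh (Amax * (v - s))" using tanh_artanh_real by simp
    qed
    have l1: "(x1 \<longlongrightarrow> tau) (at_left s')" using as' by (simp add: acts_def)
    have l2: "((\<lambda>v. tanh (Amax * (v - s))) \<longlongrightarrow> tanh (Amax * (s' - s))) (at_left s')"
      by (intro tendsto_intros) simp
    have "tau \<le> tanh (Amax * (s' - s))" by (rule tendsto_le[OF _ l2 l1 ev]) simp
    then have "artanh tau \<le> artanh (tanh (Amax * (s' - s)))"
      using tau0 tau1 tanh_real_bounds[of "Amax * (s' - s)"] by (subst artanh_le_iff) auto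
    then have "artanh tau \<le> Amax * (s' - s)" by (simp add: artanh_tanh_real)
    then show ?thesis using Amax_pos by (simp add: Lmin_def divide_le_eq mult.commute)
  qed
  have "(\<lambda>v. Gf (v - s)) s' - (\<lambda>v. Gf (v - s)) s \<le> artanh (x2 s') - artanh (x2 s)"
  proof (rule I2.z_incr[OF s])
    show "s \<le> s'" using ss' by simp
    show "\<forall>u. s < u \<and> u \<le> s' \<longrightarrow> \<not> acts tau x2 u" using na2 by (simp add: s'_def)
    show "\<forall>w\<in>{s..s'}. - 1 < x2 w" using x2_gt s by auto
    have hd: "((\<lambda>v. Gf (v - s)) has_real_derivative gp (v - s)) (at v within S)" for v S
    proof -
      have d1: "((\<lambda>v. v - s) has_real_derivative 1) (at v within S)"
        by (auto intro!: derivative_eq_intros)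
      have "(Gf has_real_derivative gp ((\<lambda>v. v - s) v)) (at ((\<lambda>v. v - s) v))"
        using Gder by simp
      from DERIV_chain2[where f = Gf and g = "\<lambda>v. v - s", OF this d1]
      show ?thesis by simp
    qed
    have "\<forall>v\<in>{s..s'}. isCont (\<lambda>v. Gf (v - s)) v" using hd DERIV_isCont by blast
    then show "continuous_on {s..s'} (\<lambda>v. Gf (v - s))" by (rule continuous_at_imp_continuous_on)
    fix v assume v: "s \<le> v" "v < s'"
    show "((\<lambda>v. Gf (v - s)) has_real_derivative gp (v - s)) (at v within {v..})" by (rule hd)
    show "gp (v - s) \<le> I2.coef v" using ysol[OF v] by (simp add: gp_def I2.coef_def)
  qed
  then have "Gf (s' - s) \<le> artanh (x2 s') - artanh (x2 s)" by (simp add: Gf0)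
  moreover have "g0 \<le> Gf (s' - s)" unfolding g0_def using G_lb gap_lo gap_hi by blast
  ultimately show ?thesis by (simp add: s'_def)
qed

lemma acts2_after: "\<exists>t\<ge>t0. acts tau x2 t"
proof (rule ccontr)
  assume "\<not> (\<exists>t\<ge>t0. acts tau x2 t)"
  then have na: "\<forall>t\<ge>t0. \<not> acts tau x2 t" by auto
  obtain s0 where s0: "s0 \<ge> max t0 0" "acts tau x1 s0" using acts1_after by blast
  define sq where "sq k = (nxt ^^ k) s0" for k
  have claim: "sq k \<ge> s0 \<and> acts tau x1 (sq k) \<and> artanh (x2 s0) + real k * g0 \<le> artanh (x2 (sq k))" for k
  proof (induction k)
    case 0 then show ?case using s0 by (simp add: sq_def)
  next
    case (Suc k)
    have e: "sq (Suc k) = nxt (sq k)" by (simp add: sq_def)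
    have sk0: "sq k \<ge> 0" using Suc s0 by simp
    have n: "nxt (sq k) > sq k" "acts tau x1 (nxt (sq k))" using nxt[OF sk0] by auto
    have "g0 \<le> artanh (x2 (nxt (sq k))) - artanh (x2 (sq k))"
    proof (rule gain[OF sk0])
      show "acts tau x1 (sq k)" using Suc by simp
      show "\<forall>u. sq k < u \<and> u \<le> nxt (sq k) \<longrightarrow> \<not> acts tau x2 u" using na Suc s0 by auto
    qed
    then show ?case using Suc n e by (simp add: algebra_simps)
  qed
  obtain k where k: "artanh tau - artanh (x2 s0) < real k * g0"
    using ex_less_of_nat_mult[OF g0_pos] by blast
  have "sq k \<ge> 0" using claim[of k] s0 by simp
  then have "artanh (x2 (sq k)) < artanh tau"
    using artanh_x_lt[OF x2_gt I2.x_lt] by auto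
  then show False using claim[of k] k by simp
qed

theorem main:
  "\<forall>tstart\<ge>0. infinite {t. acts tau x1 t \<and> t \<ge> tstart} \<and> infinite {t. acts tau x2 t \<and> t \<ge> tstart}"
  using inf_from_after acts1_after acts2_after by blast

end

theorem theorem3:
  fixes sA sS sC mS mC r tau a1 a2 :: real
    and x1 x2 y1 y2 :: "real \<Rightarrow> real"
  assumes "sA \<ge> 0" "sS \<ge> 0" "sC > 0" "0 \<le> mS" "mS \<le> 1" "mC > 0" "r > 0"
    and "0 < tau" "tau < 1"
    and "-1 < a1" "a1 < 1" "-1 < a2" "a2 < 1"
    and h1: "sA * a1 - sS * mS > 0"
    and h2: "sA * a2 - sS * mS \<le> 0"
    and h3: "x1 0 = 0" "y1 0 = 0" "y2 0 = 0" "-1 < x2 0" "x2 0 < tau"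
    and sys: "system2 sA sS sC mS mC r tau a1 a2 x1 x2 y1 y2"
    and M: "Mconst sA sS sC mS mC r tau a1 a2 > 0"
  shows "\<forall>tstart\<ge>0. infinite {t. acts tau x1 t \<and> t \<ge> tstart}
                   \<and> infinite {t. acts tau x2 t \<and> t \<ge> tstart}"
proof -
  interpret setting sA sS sC mS mC r tau a1 a2 x1 x2 y1 y2
    by unfold_locales (use assms in auto)
  show ?thesis by (rule main)
qed

end
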